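(* Let $A$ and $B$ be layouts. Then $\Phi_A=\Phi_B$ if and only if $\mathrm{coal}(A)=\mathrm{coal}(B)$.
   Context: A nested tuple is an integer or a finite tuple of nested tuples; its flattening is the tuple of its integer leaves left to right. A layout is $L=S:D$ with $S$ (positive integers) and $D$ (nonnegative integers) nested tuples of the same nesting pattern; its flattening is the flat layout $L^\flat=S^\flat:D^\flat$. For a flat layout $(s_1,\dots,s_m):(d_1,\dots,d_m)$ the layout function is $\Phi(x)=\sum_ix_id_i$ with $x_i=\lfloor x/(s_1\cdots s_{i-1})\rfloor\bmod s_i$ on $[0,s_1\cdots s_m)$; for a layout, $\Phi_L=\Phi_{L^\flat}$. For a flat layout, $\mathrm{squeeze}$ removes modes with $s_i=1$, and $\mathrm{coal}^\flat$ is obtained from the squeeze by repeatedly replacing adjacent modes $s_i,s_{i+1}:d_i,d_{i+1}$ with $d_{i+1}=s_id_i$ by $s_is_{i+1}:d_i$. For a layout $L$ with $\mathrm{coal}^\flat(L^\flat)=(s_1,\dots,s_m):(d_1,\dots,d_m)$: $\mathrm{coal}(L)$ is this flat (depth-one) layout if $m>1$, the depth-zero layout $s_1:d_1$ if $m=1$, and $1:0$ if $m=0$. *)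

theory Defs
  imports Main
begin

text \<open>Nested tuples: an integer leaf or a finite (possibly empty) tuple of nested tuples.
  Leaves are natural numbers (shapes are positive, strides nonnegative).\<close>
datatype ntup = Leaf nat | Tup "ntup list"

fun flat :: "ntup \<Rightarrow> nat list" where
  "flat (Leaf n) = [n]"
| "flat (Tup ts) = concat (map flat ts)"

fun pattern :: "ntup \<Rightarrow> ntup" where
  "pattern (Leaf n) = Leaf 0"
| "pattern (Tup ts) = Tup (map pattern ts)"

type_synonym layout = "ntup \<times> ntup"

definition is_layout :: "layout \<Rightarrow> bool" where
  "is_layout L \<longleftrightarrow> pattern (fst L) = pattern (snd L) \<and> (\<forall>s \<in> set (flat (fst L)). 0 < s)"

definition phi_flat :: "nat list \<Rightarrow> nat list \<Rightarrow> nat \<Rightarrow> nat" where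
  "phi_flat ss ds x = (\<Sum>i<length ss. (x div (\<Prod>j<i. ss ! j)) mod (ss ! i) * ds ! i)"

definition layout_size :: "layout \<Rightarrow> nat" where
  "layout_size L = prod_list (flat (fst L))"

definition layout_fun :: "layout \<Rightarrow> nat \<Rightarrow> nat" where
  "layout_fun L x = phi_flat (flat (fst L)) (flat (snd L)) x"

definition same_layout_fun :: "layout \<Rightarrow> layout \<Rightarrow> bool" where
  "same_layout_fun A B \<longleftrightarrow> layout_size A = layout_size B \<and>
     (\<forall>x < layout_size A. layout_fun A x = layout_fun B x)"

definition squeeze :: "(nat \<times> nat) list \<Rightarrow> (nat \<times> nat) list" where
  "squeeze ms = filter (\<lambda>(s, d). s \<noteq> 1) ms"

text \<open>Fully merge adjacent modes (s_i,d_i),(s_{i+1},d_{i+1}) with d_{i+1} = s_i d_i into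
  (s_i s_{i+1}, d_i), until no such pair remains (computed right to left).\<close>
fun merge_modes :: "(nat \<times> nat) list \<Rightarrow> (nat \<times> nat) list" where
  "merge_modes [] = []"
| "merge_modes ((s1, d1) # rest) =
     (case merge_modes rest of
        [] \<Rightarrow> [(s1, d1)]
      | (s2, d2) # r \<Rightarrow> (if d2 = s1 * d1 then (s1 * s2, d1) # r else (s1, d1) # (s2, d2) # r))"

definition coal_flat :: "(nat \<times> nat) list \<Rightarrow> (nat \<times> nat) list" where
  "coal_flat ms = merge_modes (squeeze ms)"

definition coal :: "layout \<Rightarrow> layout" where
  "coal L = (let ms = coal_flat (zip (flat (fst L)) (flat (snd L))) in
     if length ms > 1 then (Tup (map (Leaf \<circ> fst) ms), Tup (map (Leaf \<circ> snd) ms))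
     else if length ms = 1 then (Leaf (fst (hd ms)), Leaf (snd (hd ms)))
     else (Leaf 1, Leaf 0))"

end

theory Submission
  imports Defs
begin

fun phi :: "(nat \<times> nat) list \<Rightarrow> nat \<Rightarrow> nat" where
  "phi [] x = 0"
| "phi ((s,d)#ms) x = (x mod s) * d + phi ms (x div s)"

definition sz :: "(nat \<times> nat) list \<Rightarrow> nat" where
  "sz ms = prod_list (map fst ms)"

lemma phi_0[simp]: "phi ms 0 = 0"
  by (induction ms) auto

lemma phi_flat_Nil: "phi_flat [] ds x = 0"
  by (simp add: phi_flat_def)

lemma phi_flat_Cons:
  "phi_flat (s#ss) (d#ds) x = (x mod s) * d + phi_flat ss ds (x div s)"
proof -
  have "phi_flat (s#ss) (d#ds) x =
    (\<Sum>i<Suc (length ss). (x div (\<Prod>j<i. (s#ss) ! j)) mod ((s#ss) ! i) * (d#ds) ! i)"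
    by (simp add: phi_flat_def)
  also have "\<dots> = (x mod s) * d + (\<Sum>i<length ss. (x div (\<Prod>j<Suc i. (s#ss) ! j)) mod (ss ! i) * ds ! i)"
    by (subst sum.lessThan_Suc_shift) simp
  also have "(\<Sum>i<length ss. (x div (\<Prod>j<Suc i. (s#ss) ! j)) mod (ss ! i) * ds ! i)
     = (\<Sum>i<length ss. ((x div s) div (\<Prod>j<i. ss ! j)) mod (ss ! i) * ds ! i)"
    by (intro sum.cong refl) (simp only: prod.lessThan_Suc_shift nth_Cons_0 nth_Cons_Suc div_mult2_eq)
  finally show ?thesis by (simp add: phi_flat_def)
qed

lemma phi_flat_zip: "length ss = length ds \<Longrightarrow> phi_flat ss ds x = phi (zip ss ds) x"
proof (induction ss arbitrary: ds x)
  case Nil then show ?case by (simp add: phi_flat_Nil)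
next
  case (Cons s ss)
  then obtain d ds' where "ds = d # ds'" by (cases ds) auto
  with Cons show ?case by (simp add: phi_flat_Cons)
qed

lemma phi_squeeze: "phi (squeeze ms) x = phi ms x"
  by (induction ms arbitrary: x) (auto simp: squeeze_def)

lemma sz_squeeze: "sz (squeeze ms) = sz ms"
  by (induction ms) (auto simp: squeeze_def sz_def)

lemma phi_merge2: "d2 = s1 * d1 \<Longrightarrow> phi ((s1,d1)#(s2,d2)#r) x = phi ((s1*s2,d1)#r) x"
proof -
  assume h: "d2 = s1 * d1"
  have "(x mod s1) * d1 + ((x div s1) mod s2) * (s1 * d1) = (x mod (s1*s2)) * d1"
  proof -
    have "x mod (s1*s2) = s1 * ((x div s1) mod s2) + x mod s1"
      by (simp add: mod_mult2_eq)
    then show ?thesis by (simp add: algebra_simps)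
  qed
  then show ?thesis using h by (simp add: div_mult2_eq algebra_simps)
qed

lemma phi_merge: "phi (merge_modes ms) x = phi ms x"
proof (induction ms arbitrary: x rule: merge_modes.induct)
  case 1 then show ?case by simp
next
  case (2 s1 d1 rest)
  show ?case
  proof (cases "merge_modes rest")
    case Nil
    then show ?thesis using 2[of "x div s1"] by simp
  next
    case (Cons p r)
    obtain s2 d2 where p: "p = (s2,d2)" by (cases p)
    have "phi ((s1,d1) # merge_modes rest) x = phi ((s1,d1)#rest) x"
      using 2[of "x div s1"] by simp
    then show ?thesis using Cons p phi_merge2[of d2 s1 d1 s2 r x] by auto
  qed
qed

lemma sz_merge: "sz (merge_modes ms) = sz ms"
proof (induction ms rule: merge_modes.induct)
  case 1 then show ?case by simp
next
  case (2 s1 d1 rest)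
  then show ?case
    by (auto simp: sz_def split: list.splits)
qed

fun coalesced :: "(nat \<times> nat) list \<Rightarrow> bool" where
  "coalesced [] = True"
| "coalesced [(s,d)] = (2 \<le> s)"
| "coalesced ((s1,d1)#(s2,d2)#r) = (2 \<le> s1 \<and> d2 \<noteq> s1 * d1 \<and> coalesced ((s2,d2)#r))"

lemma coalesced_merge: "\<forall>p\<in>set ms. 2 \<le> fst p \<Longrightarrow> coalesced (merge_modes ms)"
proof (induction ms rule: merge_modes.induct)
  case 1 then show ?case by simp
next
  case (2 s1 d1 rest)
  then have IH: "coalesced (merge_modes rest)" and s1: "2 \<le> s1" by auto
  show ?case
  proof (cases "merge_modes rest")
    case Nil
    then show ?thesis using s1 by simp
  next
    case (Cons p r)
    obtain s2 d2 where p: "p = (s2,d2)" by (cases p)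
    show ?thesis
    proof (cases "d2 = s1 * d1")
      case True
      have s2: "2 \<le> s2" using IH Cons p by (cases r) auto
      have "2 \<le> s1 * s2" using s1 s2
        by (metis le_trans mult_le_mono1 mult_1 one_le_numeral)
      then have "coalesced ((s1*s2,d1)#r)"
        using IH Cons p True
        by (cases r) (auto simp: algebra_simps)
      then show ?thesis using Cons p True by simp
    next
      case False
      then show ?thesis using IH Cons p s1 by simp
    qed
  qed
qed

lemma coalesced_tail: "coalesced (a#l) \<Longrightarrow> coalesced l"
  by (cases a; cases l) auto

lemma coalesced_head: "coalesced ((s,d)#l) \<Longrightarrow> 2 \<le> s"
  by (cases l) auto

lemma sz_ge2: "coalesced (a#l) \<Longrightarrow> 2 \<le> sz (a#l)"
proof (induction l arbitrary: a)
  case Nil then show ?case by (cases a) (auto simp: sz_def)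
next
  case (Cons b l)
  obtain s d where a: "a = (s,d)" by (cases a)
  have "2 \<le> sz (b#l)" using Cons coalesced_tail by blast
  moreover have "2 \<le> s" using Cons.prems a coalesced_head by blast
  ultimately have "2 * 1 \<le> s * sz (b#l)" by (intro mult_mono) auto
  then show ?case using a by (simp add: sz_def)
qed

lemma sz_pos: "coalesced l \<Longrightarrow> 0 < sz l"
proof (cases l)
  case Nil then show ?thesis by (simp add: sz_def)
next
  case (Cons a l')
  assume "coalesced l"
  then have "2 \<le> sz l" using Cons sz_ge2 by blast
  then show ?thesis by simp
qed

lemma not_less_head:
  assumes cA: "coalesced ((s,d)#A')" and cB: "coalesced ((t,e)#B')"
    and szeq: "sz ((s,d)#A') = sz ((t,e)#B')"
    and agree: "\<forall>x < sz ((s,d)#A'). phi ((s,d)#A') x = phi ((t,e)#B') x"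
  shows "\<not> s < t"
proof
  assume st: "s < t"
  have s2: "2 \<le> s" using cA coalesced_head by blast
  have tle: "t \<le> sz ((t,e)#B')"
    using sz_pos[OF coalesced_tail[OF cB]] by (simp add: sz_def)
  show False
  proof (cases A')
    case Nil
    then have "sz ((s,d)#A') = s" by (simp add: sz_def)
    then show False using szeq st tle by simp
  next
    case (Cons q A'')
    obtain s' d' where q: "q = (s',d')" by (cases q)
    have s'2: "2 \<le> s'" using cA Cons q coalesced_tail coalesced_head by blast
    have ne: "d' \<noteq> s * d" using cA Cons q by simp
    have one: "1 < sz ((s,d)#A')" using szeq st tle s2 by linarith
    have "phi ((s,d)#A') 1 = phi ((t,e)#B') 1" using agree one by blast
    then have de: "d = e" using s2 st by simp
    have ss: "s < sz ((s,d)#A')" using szeq st tle by linarith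
    have "phi ((s,d)#A') s = phi ((t,e)#B') s" using agree ss by blast
    moreover have "phi ((s,d)#A') s = d'" using Cons q s2 s'2 by simp
    moreover have "phi ((t,e)#B') s = s * e" using st by simp
    ultimately show False using ne de by simp
  qed
qed

lemma unique:
  "coalesced A \<Longrightarrow> coalesced B \<Longrightarrow> sz A = sz B \<Longrightarrow> (\<forall>x < sz A. phi A x = phi B x) \<Longrightarrow> A = B"
proof (induction A arbitrary: B)
  case Nil
  then show ?case
    by (cases B) (auto simp: sz_def dest!: sz_ge2)
next
  case (Cons a A')
  show ?case
  proof (cases B)
    case Nil
    then show ?thesis using Cons.prems sz_ge2[of a A'] by (auto simp: sz_def)
  next
    case (Cons b B')
    obtain s d where a: "a = (s,d)" by (cases a)
    obtain t e where b: "b = (t,e)" by (cases b)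
    have st: "s = t"
      using not_less_head[of s d A' t e B'] not_less_head[of t e B' s d A'] Cons.prems Cons a b
      by (metis linorder_neqE_nat)
    have s2: "2 \<le> s" using Cons.prems(1) a coalesced_head by blast
    have tlB: "2 \<le> sz ((t,e)#B')" using Cons.prems(2) Cons b sz_ge2 by blast
    have "phi (a#A') 1 = phi B 1" using Cons.prems(3,4) tlB Cons b by auto
    then have de: "d = e" using a b Cons st s2 by simp
    have szA: "sz (a#A') = s * sz A'" using a by (simp add: sz_def)
    have szB: "sz B = s * sz B'" using Cons b st by (simp add: sz_def)
    have sz': "sz A' = sz B'" using szA szB Cons.prems(3) s2 by simp
    have ag: "\<forall>y < sz A'. phi A' y = phi B' y"
    proof (intro allI impI)
      fix y assume y: "y < sz A'"
      have "s * y < sz (a#A')" using szA y s2 by simp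
      then have "phi (a#A') (s*y) = phi B (s*y)" using Cons.prems(4) by blast
      then show "phi A' y = phi B' y" using a b Cons st s2 by simp
    qed
    have "A' = B'"
      using Cons.IH[OF coalesced_tail[OF Cons.prems(1)]] Cons.prems(2) Cons sz' ag
        coalesced_tail by blast
    then show ?thesis using a b Cons st de by simp
  qed
qed

lemma len_flat: "pattern a = pattern b \<Longrightarrow> length (flat a) = length (flat b)"
proof (induction a arbitrary: b)
  case (Leaf n)
  then show ?case by (cases b) auto
next
  case (Tup ts)
  then obtain us where b: "b = Tup us" and m: "map pattern ts = map pattern us"
    by (cases b) auto
  have "map (length \<circ> flat) ts = map (length \<circ> flat) us"
  proof (rule nth_equalityI)
    show "length (map (length \<circ> flat) ts) = length (map (length \<circ> flat) us)"
      using m by (metis length_map)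
  next
    fix i assume "i < length (map (length \<circ> flat) ts)"
    then have i: "i < length ts" "i < length us" using m by (auto dest: map_eq_imp_length_eq)
    have "pattern (ts!i) = pattern (us!i)" using m i by (metis nth_map)
    then have "length (flat (ts!i)) = length (flat (us!i))"
      using Tup.IH i(1) by auto
    then show "map (length \<circ> flat) ts ! i = map (length \<circ> flat) us ! i" using i by simp
  qed
  then show ?case using b by (simp add: length_concat)
qed

definition cms :: "layout \<Rightarrow> (nat \<times> nat) list" where
  "cms L = coal_flat (zip (flat (fst L)) (flat (snd L)))"

lemma cms_props:
  assumes "is_layout L"
  shows "coalesced (cms L)" "sz (cms L) = layout_size L"
    "\<And>x. phi (cms L) x = layout_fun L x"
proof -
  define S where "S = flat (fst L)"
  define D where "D = flat (snd L)"
  have len: "length S = length D"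
    unfolding S_def D_def by (rule len_flat) (use assms in \<open>simp add: is_layout_def\<close>)
  have pos: "\<forall>s \<in> set S. 0 < s" using assms unfolding is_layout_def S_def by blast
  have c: "cms L = merge_modes (squeeze (zip S D))"
    by (simp add: cms_def coal_flat_def S_def D_def)
  have "\<forall>p\<in>set (squeeze (zip S D)). 2 \<le> fst p"
  proof
    fix p assume p: "p \<in> set (squeeze (zip S D))"
    then have "fst p \<in> set S" "fst p \<noteq> 1" unfolding squeeze_def
      by (auto dest: set_zip_leftD)
    moreover have "0 < fst p" using pos \<open>fst p \<in> set S\<close> by blast
    ultimately show "2 \<le> fst p" by linarith
  qed
  then show "coalesced (cms L)" unfolding c by (rule coalesced_merge)
  have "sz (cms L) = sz (zip S D)" unfolding c by (simp only: sz_merge sz_squeeze)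
  also have "\<dots> = prod_list S" using len by (simp add: sz_def)
  finally show "sz (cms L) = layout_size L" by (simp add: layout_size_def S_def)
  fix x
  have "phi (cms L) x = phi (zip S D) x" unfolding c by (simp only: phi_merge phi_squeeze)
  also have "\<dots> = phi_flat S D x" using len by (simp add: phi_flat_zip)
  finally show "phi (cms L) x = layout_fun L x" by (simp add: layout_fun_def S_def D_def)
qed

definition enc :: "(nat \<times> nat) list \<Rightarrow> layout" where
  "enc ms = (if length ms > 1 then (Tup (map (Leaf \<circ> fst) ms), Tup (map (Leaf \<circ> snd) ms))
     else if length ms = 1 then (Leaf (fst (hd ms)), Leaf (snd (hd ms)))
     else (Leaf 1, Leaf 0))"

lemma coal_cms: "coal L = enc (cms L)"
  unfolding coal_def cms_def enc_def Let_def by (rule refl)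

lemma all_ge2: "coalesced l \<Longrightarrow> p \<in> set l \<Longrightarrow> 2 \<le> fst p"
  by (induction l rule: coalesced.induct) auto

lemma map_Leaf_inj: "map (Leaf \<circ> f) xs = map (Leaf \<circ> f) ys \<Longrightarrow> map f xs = map f ys"
proof -
  assume h: "map (Leaf \<circ> f) xs = map (Leaf \<circ> f) ys"
  have "map Leaf (map f xs) = map Leaf (map f ys)" using h by (simp only: map_map)
  moreover have "inj Leaf" by (simp add: inj_def)
  ultimately show ?thesis by (metis inj_map_eq_map)
qed

lemma enc_gt1: "length a > 1 \<Longrightarrow> enc a = (Tup (map (Leaf \<circ> fst) a), Tup (map (Leaf \<circ> snd) a))"
  by (simp add: enc_def)
lemma enc_1: "length a = 1 \<Longrightarrow> enc a = (Leaf (fst (hd a)), Leaf (snd (hd a)))"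
  by (simp add: enc_def)
lemma enc_0: "length a = 0 \<Longrightarrow> enc a = (Leaf 1, Leaf 0)"
  by (simp add: enc_def)

lemma enc_inj:
  assumes ca: "coalesced a" and cb: "coalesced b" and eq: "enc a = enc b"
  shows "a = b"
proof -
  have ha: "length a = 1 \<Longrightarrow> 2 \<le> fst (hd a)" using ca all_ge2
    by (metis hd_in_set length_0_conv zero_neq_one)
  have hb: "length b = 1 \<Longrightarrow> 2 \<le> fst (hd b)" using cb all_ge2
    by (metis hd_in_set length_0_conv zero_neq_one)
  consider "length a > 1" | "length a = 1" | "length a = 0" by linarith
  then show ?thesis
  proof cases
    case 1
    have "length b > 1"
    proof (rule ccontr)
      assume "\<not> length b > 1"
      then have "length b = 1 \<or> length b = 0" by linarith
      then show False
      proof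
        assume "length b = 1" then show False using eq enc_gt1[OF 1] enc_1[of b] by simp
      next
        assume "length b = 0" then show False using eq enc_gt1[OF 1] enc_0[of b] by simp
      qed
    qed
    with 1 eq have "map (Leaf \<circ> fst) a = map (Leaf \<circ> fst) b"
       "map (Leaf \<circ> snd) a = map (Leaf \<circ> snd) b" by (simp_all add: enc_gt1)
    then have "map fst a = map fst b" "map snd a = map snd b" using map_Leaf_inj by blast+
    then show ?thesis by (metis zip_map_fst_snd)
  next
    case 2
    have "length b = 1"
    proof (rule ccontr)
      assume "length b \<noteq> 1"
      then have "length b > 1 \<or> length b = 0" by linarith
      then show False
      proof
        assume "length b > 1" then show False using eq enc_1[OF 2] enc_gt1[of b] by simp
      next
        assume "length b = 0" then show False using eq enc_1[OF 2] enc_0[of b] ha[OF 2] by simp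
      qed
    qed
    then have "hd a = hd b" using eq 2 by (simp add: enc_1 prod_eq_iff)
    then show ?thesis using 2 \<open>length b = 1\<close>
      by (metis One_nat_def length_0_conv length_Suc_conv list.sel(1))
  next
    case 3
    have "length b = 0"
    proof (rule ccontr)
      assume "length b \<noteq> 0"
      then have "length b > 1 \<or> length b = 1" by linarith
      then show False
      proof
        assume "length b > 1" then show False using eq enc_0[OF 3] enc_gt1[of b] by simp
      next
        assume "length b = 1" then show False using eq enc_0[OF 3] enc_1[of b] hb by simp
      qed
    qed
    then show ?thesis using 3 by simp
  qed
qed

lemma coal_inj:
  assumes cA: "coalesced (cms A)" and cB: "coalesced (cms B)" and eq: "coal A = coal B"
  shows "cms A = cms B"
  using enc_inj[OF cA cB] eq by (simp only: coal_cms)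

theorem mainTheorem16:
  assumes "is_layout A" and "is_layout B"
  shows "same_layout_fun A B \<longleftrightarrow> coal A = coal B"
proof
  assume h: "same_layout_fun A B"
  have cA: "coalesced (cms A)" and cB: "coalesced (cms B)"
    using cms_props(1) assms by blast+
  have szA: "sz (cms A) = layout_size A" and szB: "sz (cms B) = layout_size B"
    using cms_props(2) assms by blast+
  have szeq: "sz (cms A) = sz (cms B)" using h szA szB unfolding same_layout_fun_def by simp
  have ag: "\<forall>x < sz (cms A). phi (cms A) x = phi (cms B) x"
  proof (intro allI impI)
    fix x assume "x < sz (cms A)"
    then have "x < layout_size A" using szA by simp
    then have "layout_fun A x = layout_fun B x" using h unfolding same_layout_fun_def by blast
    then show "phi (cms A) x = phi (cms B) x"
      using cms_props(3)[OF assms(1)] cms_props(3)[OF assms(2)] by simp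
  qed
  have "cms A = cms B" using unique[OF cA cB szeq ag] .
  then show "coal A = coal B" by (simp only: coal_cms)
next
  assume h: "coal A = coal B"
  have cA: "coalesced (cms A)" and cB: "coalesced (cms B)"
    using cms_props(1) assms by blast+
  have e: "cms A = cms B" using coal_inj[OF cA cB h] .
  have szA: "sz (cms A) = layout_size A" and szB: "sz (cms B) = layout_size B"
    using cms_props(2) assms by blast+
  show "same_layout_fun A B"
    unfolding same_layout_fun_def
  proof (intro conjI allI impI)
    show "layout_size A = layout_size B" using szA szB e by simp
    fix x
    show "layout_fun A x = layout_fun B x"
      using cms_props(3)[OF assms(1), of x] cms_props(3)[OF assms(2), of x] e by simp
  qed
qed

end
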